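(* Let $\{(U_n,V_n)\}_{n\ge1}$ be bivariate random vectors and $\{\mathcal F_n\}_{n\ge1}$ $\sigma$-fields such that: (1) conditionally on $\mathcal F_n$, $(U_n,V_n)\sim N_2(\bm\mu_n,\Sigma_n)$, where the random $\bm\mu_n=(\mu_n(1),\mu_n(2))^\top\in\mathbb R^2$ and $\Sigma_n=\begin{pmatrix}\Sigma_n(1,1)&\Sigma_n(1,2)\\\Sigma_n(1,2)&\Sigma_n(2,2)\end{pmatrix}\in\mathbb R^{2\times2}$ are tight; (2) $\operatorname{Cov}(U_n,V_n\mid\mathcal F_n)\xrightarrow{P}0$; (3) $(\mu_n(1),\Sigma_n(1,1))$ and $(\mu_n(2),\Sigma_n(2,2))$ are mutually independent. Then for all $t_1,t_2\in\mathbb R$, $$\lim_{n\to\infty}\Big|\mathbb E\big[e^{\mathrm i(t_1U_n+t_2V_n)}\big]-\mathbb E\big[e^{\mathrm it_1U_n}\big]\mathbb E\big[e^{\mathrm it_2V_n}\big]\Big|=0.$$ *)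

theory Defs
  imports "HOL-Probability.Probability"
begin

definition tight_seq :: "'a measure \<Rightarrow> (nat \<Rightarrow> 'a \<Rightarrow> 'b::real_normed_vector) \<Rightarrow> bool" where
  "tight_seq M X \<longleftrightarrow>
     (\<forall>e>0. \<exists>K. \<forall>n. measure M {x \<in> space M. norm (X n x) > K} \<le> e)"

definition conv_in_prob :: "'a measure \<Rightarrow> (nat \<Rightarrow> 'a \<Rightarrow> real) \<Rightarrow> real \<Rightarrow> bool" where
  "conv_in_prob M X c \<longleftrightarrow>
     (\<forall>e>0. ((\<lambda>n. measure M {x \<in> space M. \<bar>X n x - c\<bar> > e}) \<longlongrightarrow> 0) sequentially)"

text \<open>Conditionally on the sigma-field F, (U,V) is bivariate normal with (F-measurable)
  mean (m1,m2) and covariance matrix ((s11,s12),(s12,s22)): the parameters are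
  F-measurable, the covariance matrix is positive semidefinite, and the conditional
  characteristic function of (U,V) given F is the Gaussian one,
  E[exp(i(t1 U + t2 V)) | F] = exp(i(t1 m1 + t2 m2) - (t1^2 s11 + 2 t1 t2 s12 + t2^2 s22)/2)
  a.s., stated via its real and imaginary parts.\<close>
definition cond_normal2 ::
  "'a measure \<Rightarrow> 'a measure \<Rightarrow> ('a \<Rightarrow> real) \<Rightarrow> ('a \<Rightarrow> real) \<Rightarrow>
   ('a \<Rightarrow> real) \<Rightarrow> ('a \<Rightarrow> real) \<Rightarrow> ('a \<Rightarrow> real) \<Rightarrow> ('a \<Rightarrow> real) \<Rightarrow> ('a \<Rightarrow> real) \<Rightarrow> bool" where
  "cond_normal2 M F U V m1 m2 s11 s12 s22 \<longleftrightarrow>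
     m1 \<in> borel_measurable F \<and> m2 \<in> borel_measurable F \<and>
     s11 \<in> borel_measurable F \<and> s12 \<in> borel_measurable F \<and> s22 \<in> borel_measurable F \<and>
     (\<forall>x\<in>space M. 0 \<le> s11 x \<and> 0 \<le> s22 x \<and> (s12 x)\<^sup>2 \<le> s11 x * s22 x) \<and>
     (\<forall>t1 t2::real.
        (AE x in M. real_cond_exp M F (\<lambda>y. cos (t1 * U y + t2 * V y)) x =
           exp (- (t1\<^sup>2 * s11 x + 2 * t1 * t2 * s12 x + t2\<^sup>2 * s22 x) / 2)
             * cos (t1 * m1 x + t2 * m2 x)) \<and>
        (AE x in M. real_cond_exp M F (\<lambda>y. sin (t1 * U y + t2 * V y)) x =
           exp (- (t1\<^sup>2 * s11 x + 2 * t1 * t2 * s12 x + t2\<^sup>2 * s22 x) / 2)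
             * sin (t1 * m1 x + t2 * m2 x)))"

end

theory Submission
  imports Defs
begin

lemma psd_nonneg:
  fixes s11 s12 s22 t1 t2 :: real
  assumes "0 \<le> s11" "0 \<le> s22" "s12\<^sup>2 \<le> s11 * s22"
  shows "0 \<le> t1\<^sup>2 * s11 + 2 * t1 * t2 * s12 + t2\<^sup>2 * s22"
proof -
  define a where "a = t1\<^sup>2 * s11"
  define b where "b = t2\<^sup>2 * s22"
  define c where "c = t1 * t2 * s12"
  have a: "0 \<le> a" "0 \<le> b" using assms by (auto simp: a_def b_def)
  have "c\<^sup>2 \<le> a * b"
  proof -
    have "c\<^sup>2 = (t1\<^sup>2 * t2\<^sup>2) * s12\<^sup>2" by (simp add: c_def power_mult_distrib)
    also have "\<dots> \<le> (t1\<^sup>2 * t2\<^sup>2) * (s11 * s22)" by (intro mult_left_mono assms) auto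
    also have "\<dots> = a * b" by (simp add: a_def b_def)
    finally show ?thesis .
  qed
  also have "a * b \<le> ((a + b)/2)\<^sup>2"
  proof -
    have "((a + b)/2)\<^sup>2 - a * b = ((a - b)/2)\<^sup>2" by (simp add: power2_eq_square field_simps)
    thus ?thesis by (metis diff_ge_0_iff_ge zero_le_power2)
  qed
  finally have "c\<^sup>2 \<le> ((a + b)/2)\<^sup>2" .
  hence "\<bar>c\<bar> \<le> \<bar>(a + b)/2\<bar>" using abs_le_square_iff by blast
  moreover have "\<bar>(a + b)/2\<bar> = (a + b)/2" using a by simp
  ultimately have "- c \<le> (a + b)/2" using abs_ge_minus_self[of c] by linarith
  hence "0 \<le> a + 2 * c + b" by simp
  thus ?thesis by (simp add: a_def b_def c_def)
qed

lemma cis_measurable[measurable]: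
  "f \<in> borel_measurable M \<Longrightarrow> (\<lambda>x. cis (f x)) \<in> borel_measurable M"
  unfolding cis_conv_exp by measurable

lemma cis_int_eq:
  assumes P: "prob_space M" and sub: "subalgebra M F"
    and UV: "U \<in> borel_measurable M" "V \<in> borel_measurable M"
    and cn: "cond_normal2 M F U V m1 m2 s11 s12 s22"
  shows "(LINT x|M. cis (t1 * U x + t2 * V x)) =
     (LINT x|M. complex_of_real (exp (- (t1\<^sup>2 * s11 x + 2 * t1 * t2 * s12 x + t2\<^sup>2 * s22 x) / 2))
        * cis (t1 * m1 x + t2 * m2 x))"
proof -
  interpret prob_space M by (rule P)
  have mF: "m1 \<in> borel_measurable F" "m2 \<in> borel_measurable F" "s11 \<in> borel_measurable F"
     "s12 \<in> borel_measurable F" "s22 \<in> borel_measurable F"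
    using cn unfolding cond_normal2_def by auto
  have [measurable]: "m1 \<in> borel_measurable M" "m2 \<in> borel_measurable M" "s11 \<in> borel_measurable M"
     "s12 \<in> borel_measurable M" "s22 \<in> borel_measurable M"
    using mF measurable_from_subalg[OF sub] by auto
  have [measurable]: "U \<in> borel_measurable M" "V \<in> borel_measurable M" using UV by auto
  have psd: "\<And>x. x \<in> space M \<Longrightarrow> 0 \<le> t1\<^sup>2 * s11 x + 2 * t1 * t2 * s12 x + t2\<^sup>2 * s22 x"
    using cn unfolding cond_normal2_def by (auto intro!: psd_nonneg)
  define Q where "Q x = t1\<^sup>2 * s11 x + 2 * t1 * t2 * s12 x + t2\<^sup>2 * s22 x" for x
  have [measurable]: "Q \<in> borel_measurable M" unfolding Q_def by measurable
  have Qn: "exp (- Q x / 2) \<le> 1" if "x \<in> space M" for x using psd[OF that] by (simp add: Q_def)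
  have AEc: "AE x in M. real_cond_exp M F (\<lambda>y. cos (t1 * U y + t2 * V y)) x =
           exp (- Q x / 2) * cos (t1 * m1 x + t2 * m2 x)"
   and AEs: "AE x in M. real_cond_exp M F (\<lambda>y. sin (t1 * U y + t2 * V y)) x =
           exp (- Q x / 2) * sin (t1 * m1 x + t2 * m2 x)"
    using cn unfolding cond_normal2_def Q_def by auto
  interpret sf: sigma_finite_subalgebra M F
    by (rule sigma_finite_subalgebra.intro[OF sub])
      (use prob_space_restr_to_subalg[OF sub P] prob_space_imp_sigma_finite in blast)
  have rcm: "real_cond_exp M F f \<in> borel_measurable M" for f
    by (rule borel_measurable_cond_exp2)
  have icos: "integrable M (\<lambda>y. cos (t1 * U y + t2 * V y))"
    by (rule integrable_const_bound[where B=1]) auto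
  have isin: "integrable M (\<lambda>y. sin (t1 * U y + t2 * V y))"
    by (rule integrable_const_bound[where B=1]) auto
  have c1: "(LINT y|M. cos (t1 * U y + t2 * V y)) = (LINT x|M. exp (- Q x / 2) * cos (t1 * m1 x + t2 * m2 x))"
    using sf.real_cond_exp_int(2)[OF icos] integral_cong_AE[OF rcm _ AEc] by simp
  have s1: "(LINT y|M. sin (t1 * U y + t2 * V y)) = (LINT x|M. exp (- Q x / 2) * sin (t1 * m1 x + t2 * m2 x))"
    using sf.real_cond_exp_int(2)[OF isin] integral_cong_AE[OF rcm _ AEs] by simp
  have iL: "integrable M (\<lambda>x. cis (t1 * U x + t2 * V x))"
    by (rule integrable_const_bound[where B=1]) auto
  have iR: "integrable M (\<lambda>x. complex_of_real (exp (- Q x / 2)) * cis (t1 * m1 x + t2 * m2 x))"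
  proof (rule integrable_const_bound[where B=1])
    show "AE x in M. norm (complex_of_real (exp (- Q x / 2)) * cis (t1 * m1 x + t2 * m2 x)) \<le> 1"
    proof (rule AE_I2)
      fix x assume "x \<in> space M"
      thus "norm (complex_of_real (exp (- Q x / 2)) * cis (t1 * m1 x + t2 * m2 x)) \<le> 1"
        using Qn[of x] by (simp add: norm_mult)
    qed
  qed auto
  have "(LINT x|M. cis (t1 * U x + t2 * V x)) =
     (LINT x|M. complex_of_real (exp (- Q x / 2)) * cis (t1 * m1 x + t2 * m2 x))"
  proof (rule complex_eqI)
    show "Re (LINT x|M. cis (t1 * U x + t2 * V x)) =
     Re (LINT x|M. complex_of_real (exp (- Q x / 2)) * cis (t1 * m1 x + t2 * m2 x))"
      using integral_Re[OF iL] integral_Re[OF iR] c1 by simp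
    show "Im (LINT x|M. cis (t1 * U x + t2 * V x)) =
     Im (LINT x|M. complex_of_real (exp (- Q x / 2)) * cis (t1 * m1 x + t2 * m2 x))"
      using integral_Im[OF iL] integral_Im[OF iR] s1 by simp
  qed
  thus ?thesis unfolding Q_def .
qed

lemma int_to_zero:
  fixes h S :: "nat \<Rightarrow> 'a \<Rightarrow> real"
  assumes P: "prob_space M" and hm: "\<And>n. h n \<in> borel_measurable M"
   and Sm: "\<And>n. S n \<in> borel_measurable M"
   and hb: "\<And>n x. x \<in> space M \<Longrightarrow> 0 \<le> h n x \<and> h n x \<le> 1"
   and small: "\<And>e. e > 0 \<Longrightarrow> \<exists>\<eta>>0. \<forall>n x. x \<in> space M \<longrightarrow> \<bar>S n x\<bar> \<le> \<eta> \<longrightarrow> h n x \<le> e"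
   and cp: "conv_in_prob M S 0"
  shows "(\<lambda>n. LINT x|M. h n x) \<longlonglongrightarrow> 0"
proof (rule LIMSEQ_I)
  interpret prob_space M by (rule P)
  fix r :: real assume r: "0 < r"
  obtain \<eta> where eta: "\<eta> > 0" "\<And>n x. x \<in> space M \<Longrightarrow> \<bar>S n x\<bar> \<le> \<eta> \<Longrightarrow> h n x \<le> r/2"
    using small[of "r/2"] r by auto
  have "(\<lambda>n. measure M {x \<in> space M. \<bar>S n x - 0\<bar> > \<eta>}) \<longlonglongrightarrow> 0"
    using cp eta(1) unfolding conv_in_prob_def by blast
  from LIMSEQ_D[OF this, of "r/2"] r obtain no where
    no: "\<And>n. n \<ge> no \<Longrightarrow> norm (measure M {x \<in> space M. \<bar>S n x - 0\<bar> > \<eta>} - 0) < r/2"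
    by auto
  show "\<exists>no. \<forall>n\<ge>no. norm ((LINT x|M. h n x) - 0) < r"
  proof (intro exI allI impI)
    fix n assume n: "n \<ge> no"
    define A where "A = {x \<in> space M. \<bar>S n x - 0\<bar> > \<eta>}"
    have [measurable]: "S n \<in> borel_measurable M" "h n \<in> borel_measurable M" using Sm hm by auto
    have A: "A \<in> sets M" unfolding A_def by measurable
    have ih: "integrable M (h n)"
    proof (rule integrable_const_bound[where B=1])
      show "AE x in M. norm (h n x) \<le> 1"
        by (rule AE_I2) (use hb in force)
    qed simp
    have ii: "integrable M (\<lambda>x. r/2 + indicator A x)" 
      using A by (intro Bochner_Integration.integrable_add integrable_real_indicator) (auto simp: emeasure_eq_measure)
    have "(LINT x|M. h n x) \<le> (LINT x|M. r/2 + indicator A x)"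
    proof (rule integral_mono[OF ih ii])
      fix x assume x: "x \<in> space M"
      show "h n x \<le> r/2 + indicator A x"
      proof (cases "x \<in> A")
        case True thus ?thesis using hb[OF x, of n] r by simp
      next
        case False thus ?thesis using eta(2)[OF x, of n] x by (simp add: A_def not_less)
      qed
    qed
    also have "(LINT x|M. r/2 + indicator A x) = r/2 + measure M A"
    proof -
      have iA: "integrable M (indicator A :: 'a \<Rightarrow> real)"
        using A by (intro integrable_real_indicator) (auto simp: emeasure_eq_measure)
      show ?thesis using A iA
        by (subst Bochner_Integration.integral_add) (auto simp: prob_space)
    qed
    also have "r/2 + measure M A < r" using no[OF n] by (simp add: A_def)
    finally have lt: "(LINT x|M. h n x) < r" .
    have "0 \<le> (LINT x|M. h n x)" by (rule Bochner_Integration.integral_nonneg) (use hb in blast)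
    thus "norm ((LINT x|M. h n x) - 0) < r" using lt by simp
  qed
qed

lemma pt_bound:
  fixes a b c :: real
  assumes "0 \<le> a" "0 \<le> b" "0 \<le> a + 2 * c + b"
  shows "\<bar>exp (- (a + 2 * c + b) / 2) - exp (- a / 2) * exp (- b / 2)\<bar> \<le> \<bar>exp (- c) - 1\<bar>"
    and "\<bar>exp (- (a + 2 * c + b) / 2) - exp (- a / 2) * exp (- b / 2)\<bar> \<le> 1"
proof -
  have e1: "exp (- (a + 2 * c + b) / 2) = exp (- (a + b) / 2) * exp (- c)"
    by (simp add: exp_add[symmetric] field_simps)
  have e2: "exp (- a / 2) * exp (- b / 2) = exp (- (a + b) / 2)"
    by (simp add: exp_add[symmetric] field_simps)
  have E: "exp (- (a + b) / 2) \<le> 1" "0 < exp (- (a + b) / 2)" using assms by auto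
  have "\<bar>exp (- (a + 2 * c + b) / 2) - exp (- a / 2) * exp (- b / 2)\<bar>
        = exp (- (a + b) / 2) * \<bar>exp (- c) - 1\<bar>"
  proof -
    have "exp (- (a + b) / 2) * exp (- c) - exp (- (a + b) / 2) = exp (- (a + b) / 2) * (exp (- c) - 1)"
      by (simp add: right_diff_distrib)
    thus ?thesis unfolding e1 e2 by (simp only: abs_mult abs_of_pos[OF E(2)])
  qed
  also have "\<dots> \<le> \<bar>exp (- c) - 1\<bar>" using E by (simp add: mult_left_le_one_le)
  finally show "\<bar>exp (- (a + 2 * c + b) / 2) - exp (- a / 2) * exp (- b / 2)\<bar> \<le> \<bar>exp (- c) - 1\<bar>" .
  have p1: "exp (- (a + 2 * c + b) / 2) \<le> 1" using assms by simp
  have p2: "exp (- a / 2) * exp (- b / 2) \<le> 1" using e2 E by simp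
  have "0 < exp (- (a + 2 * c + b) / 2)" "0 < exp (- a / 2) * exp (- b / 2)" by auto
  thus "\<bar>exp (- (a + 2 * c + b) / 2) - exp (- a / 2) * exp (- b / 2)\<bar> \<le> 1" using p1 p2 by linarith
qed

lemma exp_cont_small:
  fixes e :: real assumes "e > 0"
  shows "\<exists>d>0. \<forall>y. \<bar>y\<bar> < d \<longrightarrow> \<bar>exp (- y) - 1\<bar> \<le> e"
proof -
  have "(\<lambda>y::real. exp (- y)) \<midarrow>0\<rightarrow> exp (- 0)"
    by (intro tendsto_intros)
  from LIM_D[OF this assms] obtain d where d: "d > 0"
    "\<And>y::real. y \<noteq> 0 \<and> norm (y - 0) < d \<longrightarrow> norm (exp (- y) - exp (- 0)) < e" by blast
  show ?thesis
  proof (intro exI[of _ d] conjI allI impI)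
    fix y :: real assume "\<bar>y\<bar> < d"
    thus "\<bar>exp (- y) - 1\<bar> \<le> e" using d(2)[of y] assms by (cases "y = 0") auto
  qed (use d in auto)
qed

theorem lemmaA1:
  fixes M :: "'a measure"
    and F :: "nat \<Rightarrow> 'a measure"
    and U V :: "nat \<Rightarrow> 'a \<Rightarrow> real"
    and mu1 mu2 S11 S12 S22 :: "nat \<Rightarrow> 'a \<Rightarrow> real"
  assumes "prob_space M"
    and "\<And>n. subalgebra M (F n)"
    and "\<And>n. U n \<in> borel_measurable M"
    and "\<And>n. V n \<in> borel_measurable M"
    and "\<And>n. cond_normal2 M (F n) (U n) (V n) (mu1 n) (mu2 n) (S11 n) (S12 n) (S22 n)"
    and "tight_seq M (\<lambda>n x. (mu1 n x, mu2 n x))"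
    and "tight_seq M (\<lambda>n x. (S11 n x, S12 n x, S22 n x))"
    and "conv_in_prob M S12 0"
    and "\<And>n. prob_space.indep_var M borel (\<lambda>x. (mu1 n x, S11 n x)) borel (\<lambda>x. (mu2 n x, S22 n x))"
  shows "((\<lambda>n. cmod ((LINT x|M. cis (t1 * U n x + t2 * V n x))
                    - (LINT x|M. cis (t1 * U n x)) * (LINT x|M. cis (t2 * V n x))))
           \<longlongrightarrow> 0) sequentially"
proof -
  interpret prob_space M by (rule assms(1))
  have mF: "mu1 n \<in> borel_measurable (F n)" "mu2 n \<in> borel_measurable (F n)" "S11 n \<in> borel_measurable (F n)"
     "S12 n \<in> borel_measurable (F n)" "S22 n \<in> borel_measurable (F n)" for n
    using assms(5)[of n] unfolding cond_normal2_def by auto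
  have [measurable]: "mu1 n \<in> borel_measurable M" "mu2 n \<in> borel_measurable M" "S11 n \<in> borel_measurable M"
     "S12 n \<in> borel_measurable M" "S22 n \<in> borel_measurable M" for n
    using mF[of n] measurable_from_subalg[OF assms(2)[of n]] by auto
  have psd: "0 \<le> S11 n x" "0 \<le> S22 n x" "(S12 n x)\<^sup>2 \<le> S11 n x * S22 n x" if "x \<in> space M" for n x
    using assms(5)[of n] that unfolding cond_normal2_def by auto
  define a where "a n x = t1\<^sup>2 * S11 n x" for n x
  define b where "b n x = t2\<^sup>2 * S22 n x" for n x
  define c where "c n x = t1 * t2 * S12 n x" for n x
  define h where "h n x = \<bar>exp (- (a n x + 2 * c n x + b n x) / 2) - exp (- a n x / 2) * exp (- b n x / 2)\<bar>" for n x
  have abc: "0 \<le> a n x" "0 \<le> b n x" "0 \<le> a n x + 2 * c n x + b n x" if "x \<in> space M" for n x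
  proof -
    show "0 \<le> a n x" "0 \<le> b n x" using psd[OF that] by (auto simp: a_def b_def)
    have "0 \<le> t1\<^sup>2 * S11 n x + 2 * t1 * t2 * S12 n x + t2\<^sup>2 * S22 n x"
      using psd[OF that] by (intro psd_nonneg)
    thus "0 \<le> a n x + 2 * c n x + b n x" by (simp add: a_def b_def c_def mult.assoc)
  qed
  have bound: "cmod ((LINT x|M. cis (t1 * U n x + t2 * V n x))
                    - (LINT x|M. cis (t1 * U n x)) * (LINT x|M. cis (t2 * V n x))) \<le> (LINT x|M. h n x)" for n
  proof -
    define th where "th x = t1 * mu1 n x + t2 * mu2 n x" for x
    note cie = cis_int_eq[OF assms(1) assms(2)[of n] assms(3)[of n] assms(4)[of n] assms(5)[of n]]
    have eqA: "(LINT x|M. cis (t1 * U n x + t2 * V n x)) =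
      (LINT x|M. complex_of_real (exp (- (a n x + 2 * c n x + b n x) / 2)) * cis (th x))"
      using cie[of t1 t2] by (simp add: a_def b_def c_def th_def mult.assoc)
    have eqB: "(LINT x|M. cis (t1 * U n x)) = (LINT x|M. complex_of_real (exp (- a n x / 2)) * cis (t1 * mu1 n x))"
      using cie[of t1 0] by (simp add: a_def)
    have eqC: "(LINT x|M. cis (t2 * V n x)) = (LINT x|M. complex_of_real (exp (- b n x / 2)) * cis (t2 * mu2 n x))"
      using cie[of 0 t2] by (simp add: b_def)
    define g1 where "g1 p = complex_of_real (exp (- (t1\<^sup>2 * snd p) / 2)) * cis (t1 * fst p)" for p :: "real \<times> real"
    define g2 where "g2 p = complex_of_real (exp (- (t2\<^sup>2 * snd p) / 2)) * cis (t2 * fst p)" for p :: "real \<times> real"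
    have g1m: "g1 \<in> borel_measurable borel" unfolding g1_def cis_conv_exp
      by (intro borel_measurable_continuous_onI continuous_intros) auto
    have g2m: "g2 \<in> borel_measurable borel" unfolding g2_def cis_conv_exp
      by (intro borel_measurable_continuous_onI continuous_intros) auto
    have ind: "indep_var borel (g1 \<circ> (\<lambda>x. (mu1 n x, S11 n x))) borel (g2 \<circ> (\<lambda>x. (mu2 n x, S22 n x)))"
      by (rule indep_var_compose[OF assms(9)[of n] g1m g2m])
    have G1: "(g1 \<circ> (\<lambda>x. (mu1 n x, S11 n x))) = (\<lambda>x. complex_of_real (exp (- a n x / 2)) * cis (t1 * mu1 n x))"
      by (simp add: g1_def a_def comp_def)
    have G2: "(g2 \<circ> (\<lambda>x. (mu2 n x, S22 n x))) = (\<lambda>x. complex_of_real (exp (- b n x / 2)) * cis (t2 * mu2 n x))"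
      by (simp add: g2_def b_def comp_def)
    have int1: "integrable M (\<lambda>x. complex_of_real (exp (- a n x / 2)) * cis (t1 * mu1 n x))"
    proof (rule integrable_const_bound[where B=1])
      show "AE x in M. norm (complex_of_real (exp (- a n x / 2)) * cis (t1 * mu1 n x)) \<le> 1"
      proof (rule AE_I2)
        fix x assume "x \<in> space M"
        thus "norm (complex_of_real (exp (- a n x / 2)) * cis (t1 * mu1 n x)) \<le> 1"
          using abc(1)[of x n] by (simp add: norm_mult)
      qed
    qed (simp add: a_def)
    have int2: "integrable M (\<lambda>x. complex_of_real (exp (- b n x / 2)) * cis (t2 * mu2 n x))"
    proof (rule integrable_const_bound[where B=1])
      show "AE x in M. norm (complex_of_real (exp (- b n x / 2)) * cis (t2 * mu2 n x)) \<le> 1"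
      proof (rule AE_I2)
        fix x assume "x \<in> space M"
        thus "norm (complex_of_real (exp (- b n x / 2)) * cis (t2 * mu2 n x)) \<le> 1"
          using abc(2)[of x n] by (simp add: norm_mult)
      qed
    qed (simp add: b_def)
    have ind': "indep_var borel (\<lambda>x. complex_of_real (exp (- a n x / 2)) * cis (t1 * mu1 n x))
       borel (\<lambda>x. complex_of_real (exp (- b n x / 2)) * cis (t2 * mu2 n x))"
      using ind unfolding G1 G2 .
    have prod: "(LINT x|M. cis (t1 * U n x)) * (LINT x|M. cis (t2 * V n x)) =
      (LINT x|M. (complex_of_real (exp (- a n x / 2)) * cis (t1 * mu1 n x)) *
                 (complex_of_real (exp (- b n x / 2)) * cis (t2 * mu2 n x)))"
      unfolding eqB eqC by (rule indep_var_lebesgue_integral[OF ind' int1 int2, symmetric])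
    have intP: "integrable M (\<lambda>x. (complex_of_real (exp (- a n x / 2)) * cis (t1 * mu1 n x)) *
                 (complex_of_real (exp (- b n x / 2)) * cis (t2 * mu2 n x)))"
      by (rule indep_var_integrable[OF ind' int1 int2])
    have intA: "integrable M (\<lambda>x. complex_of_real (exp (- (a n x + 2 * c n x + b n x) / 2)) * cis (th x))"
    proof (rule integrable_const_bound[where B=1])
      show "AE x in M. norm (complex_of_real (exp (- (a n x + 2 * c n x + b n x) / 2)) * cis (th x)) \<le> 1"
      proof (rule AE_I2)
        fix x assume "x \<in> space M"
        thus "norm (complex_of_real (exp (- (a n x + 2 * c n x + b n x) / 2)) * cis (th x)) \<le> 1"
          using abc(3)[of x n] by (simp add: norm_mult)
      qed
    qed (simp add: a_def b_def c_def th_def)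
    have pw: "norm (complex_of_real (exp (- (a n x + 2 * c n x + b n x) / 2)) * cis (th x) -
       (complex_of_real (exp (- a n x / 2)) * cis (t1 * mu1 n x)) *
                 (complex_of_real (exp (- b n x / 2)) * cis (t2 * mu2 n x))) = h n x" for x
    proof -
      have eq: "complex_of_real (exp (- (a n x + 2 * c n x + b n x) / 2)) * cis (th x) -
       (complex_of_real (exp (- a n x / 2)) * cis (t1 * mu1 n x)) *
                 (complex_of_real (exp (- b n x / 2)) * cis (t2 * mu2 n x))
        = complex_of_real (exp (- (a n x + 2 * c n x + b n x) / 2) - exp (- a n x / 2) * exp (- b n x / 2)) * cis (th x)"
        by (simp add: th_def cis_mult[symmetric] algebra_simps)
      show ?thesis unfolding eq norm_mult norm_of_real h_def by simp
    qed
    have dif: "(LINT x|M. cis (t1 * U n x + t2 * V n x))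
                    - (LINT x|M. cis (t1 * U n x)) * (LINT x|M. cis (t2 * V n x)) =
       (LINT x|M. complex_of_real (exp (- (a n x + 2 * c n x + b n x) / 2)) * cis (th x) -
       (complex_of_real (exp (- a n x / 2)) * cis (t1 * mu1 n x)) *
                 (complex_of_real (exp (- b n x / 2)) * cis (t2 * mu2 n x)))"
      unfolding eqA prod by (rule Bochner_Integration.integral_diff[OF intA intP, symmetric])
    have "cmod ((LINT x|M. cis (t1 * U n x + t2 * V n x))
                    - (LINT x|M. cis (t1 * U n x)) * (LINT x|M. cis (t2 * V n x))) \<le>
         (LINT x|M. norm (complex_of_real (exp (- (a n x + 2 * c n x + b n x) / 2)) * cis (th x) -
       (complex_of_real (exp (- a n x / 2)) * cis (t1 * mu1 n x)) *
                 (complex_of_real (exp (- b n x / 2)) * cis (t2 * mu2 n x))))"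
      unfolding dif by (rule integral_norm_bound)
    thus ?thesis unfolding pw .
  qed
  have lim: "(\<lambda>n. LINT x|M. h n x) \<longlonglongrightarrow> 0"
  proof (rule int_to_zero[OF assms(1) _ _ _ _ assms(8)])
    show "h n \<in> borel_measurable M" for n unfolding h_def a_def b_def c_def by measurable
    show "S12 n \<in> borel_measurable M" for n by measurable
    show "0 \<le> h n x \<and> h n x \<le> 1" if "x \<in> space M" for n x
      using pt_bound(2)[OF abc[OF that]] by (simp add: h_def)
    fix e :: real assume "e > 0"
    from exp_cont_small[OF this] obtain d where d: "d > 0" "\<And>y. \<bar>y\<bar> < d \<Longrightarrow> \<bar>exp (- y) - 1\<bar> \<le> e" by blast
    define \<eta> where "\<eta> = d / (2 * (\<bar>t1 * t2\<bar> + 1))"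
    have eta: "\<eta> > 0" using d by (simp add: \<eta>_def add_pos_nonneg)
    show "\<exists>\<eta>>0. \<forall>n x. x \<in> space M \<longrightarrow> \<bar>S12 n x\<bar> \<le> \<eta> \<longrightarrow> h n x \<le> e"
    proof (intro exI[of _ \<eta>] conjI allI impI eta)
      fix n x assume x: "x \<in> space M" and s: "\<bar>S12 n x\<bar> \<le> \<eta>"
      have "\<bar>c n x\<bar> = \<bar>t1 * t2\<bar> * \<bar>S12 n x\<bar>" by (simp add: c_def abs_mult)
      also have "\<dots> \<le> \<bar>t1 * t2\<bar> * \<eta>" by (intro mult_left_mono s) simp
      also have "\<dots> < d"
      proof -
        have "\<bar>t1 * t2\<bar> * \<eta> = d * (\<bar>t1 * t2\<bar> / (2 * (\<bar>t1 * t2\<bar> + 1)))" by (simp add: \<eta>_def)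
        also have "\<dots> < d * 1" using d(1)
          by (intro mult_strict_left_mono) (auto simp: field_simps)
        finally show ?thesis by simp
      qed
      finally have ce: "\<bar>exp (- c n x) - 1\<bar> \<le> e" by (rule d(2))
      have "h n x \<le> \<bar>exp (- c n x) - 1\<bar>" unfolding h_def by (rule pt_bound(1)[OF abc[of x n, OF x]])
      thus "h n x \<le> e" using ce by linarith
    qed
  qed
  show ?thesis
  proof (rule tendsto_sandwich[OF _ _ tendsto_const lim])
    show "\<forall>\<^sub>F n in sequentially. 0 \<le> cmod ((LINT x|M. cis (t1 * U n x + t2 * V n x))
                    - (LINT x|M. cis (t1 * U n x)) * (LINT x|M. cis (t2 * V n x)))" by simp
    show "\<forall>\<^sub>F n in sequentially. cmod ((LINT x|M. cis (t1 * U n x + t2 * V n x))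
                    - (LINT x|M. cis (t1 * U n x)) * (LINT x|M. cis (t2 * V n x))) \<le> (LINT x|M. h n x)"
      using bound by simp
  qed
qed

end
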